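(* The function $\mathcal{I}$ is strictly increasing on $[0,1]\cap\mathbb{Q}$: for all rationals $0\le x<y\le1$, $\mathcal{I}(x)<\mathcal{I}(y)$.
   Context: For $x\in\mathbb{R}$ let $\{x\}=x-\lfloor x\rfloor$. The interrobang function $\mathcal{I}\colon[0,1]\cap\mathbb{Q}\to\mathbb{R}$ is defined recursively by $\mathcal{I}(0)=0$; $\mathcal{I}(x)=4^{-\lfloor1/x\rfloor}\big(1-2\,\mathcal{I}(\{1/x\})\big)$ if $0<x\le\tfrac12$; and $\mathcal{I}(x)=\tfrac38-\tfrac34\,\mathcal{I}(1/x-1)-\tfrac12\,\mathcal{I}(1-x)$ if $\tfrac12<x\le1$. The recursion is well founded: with the height $a/b\mapsto|a|+|b|$ ($\gcd(a,b)=1$), every argument on the right-hand side has strictly smaller height than $x$, so $\mathcal{I}$ is uniquely defined. *)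

theory Defs
  imports Complex_Main
begin

text \<open>We define it as the unique function satisfying the recursive equations on [0,1];
  outside [0,1] the value is fixed to 0 so that the function is unique.\<close>

definition interrobang_eqs :: "(rat \<Rightarrow> real) \<Rightarrow> bool" where
  "interrobang_eqs f \<longleftrightarrow>
     f 0 = 0 \<and>
     (\<forall>x. 0 < x \<and> x \<le> 1/2 \<longrightarrow>
        f x = (1/4) ^ nat \<lfloor>1/x\<rfloor> * (1 - 2 * f (frac (1/x)))) \<and>
     (\<forall>x. 1/2 < x \<and> x \<le> 1 \<longrightarrow>
        f x = 3/8 - 3/4 * f (1/x - 1) - 1/2 * f (1 - x)) \<and>
     (\<forall>x. x < 0 \<or> 1 < x \<longrightarrow> f x = 0)"

definition interrobang :: "rat \<Rightarrow> real" where
  "interrobang = (THE f. interrobang_eqs f)"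

end

theory Submission imports Defs begin

definition ht :: "rat \<Rightarrow> nat" where
  "ht x = nat \<bar>fst (quotient_of x)\<bar> + nat (snd (quotient_of x))"

lemma ht_le:
  assumes q: "q > 0" and x: "x = of_int p / of_int q"
  shows "ht x \<le> nat \<bar>p\<bar> + nat q"
proof -
  obtain a b where ab: "quotient_of x = (a,b)" by (cases "quotient_of x")
  have b: "b > 0" using ab quotient_of_denom_pos by blast
  have cop: "coprime a b" using ab quotient_of_coprime by blast
  have "x = of_int a / of_int b" using ab quotient_of_div by blast
  with x have "of_int a / of_int b = (of_int p / of_int q :: rat)" by simp
  hence "of_int a * of_int q = (of_int p * of_int b :: rat)"
    using b q by (simp add: frac_eq_eq)
  hence eq: "a * q = p * b" by (metis of_int_eq_iff of_int_mult)
  have "b dvd a * q" by (simp add: eq)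
  hence "b dvd q" using cop
    by (metis coprime_commute coprime_dvd_mult_right_iff)
  then obtain k where k: "q = b * k" by blast
  have kpos: "k > 0" using k b q by (simp add: zero_less_mult_iff)
  have "a * k = p" using eq k b by (simp add: algebra_simps)
  hence pa: "\<bar>p\<bar> = \<bar>a\<bar> * k" using kpos by (metis abs_mult abs_of_pos)
  have "\<bar>a\<bar> * 1 \<le> \<bar>a\<bar> * k" by (rule mult_left_mono) (use kpos in simp_all)
  hence "\<bar>a\<bar> \<le> \<bar>p\<bar>" using pa by simp
  moreover have "b * 1 \<le> b * k" by (rule mult_left_mono) (use kpos b in simp_all)
  hence "b \<le> q" using k by simp
  ultimately show ?thesis using ab by (simp add: ht_def)
qed

lemma ht_form:
  assumes "x > 0"
  obtains a b where "x = of_int a / of_int b" "a > 0" "b > 0" "ht x = nat a + nat b"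
proof -
  obtain a b where ab: "quotient_of x = (a,b)" by (cases "quotient_of x")
  have b: "b > 0" using ab quotient_of_denom_pos by blast
  have xe: "x = of_int a / of_int b" using ab quotient_of_div by blast
  have "a > 0" using assms xe b by (simp add: zero_less_divide_iff)
  then show ?thesis using that xe b ab by (simp add: ht_def)
qed

lemma ht_frac:
  assumes "0 < x" "x \<le> 1/2"
  shows "ht (frac (1/x)) < ht x"
proof -
  obtain a b where xe: "x = of_int a / of_int b" and a: "a > 0" and b: "b > 0"
    and h: "ht x = nat a + nat b" using ht_form assms(1) by blast
  have "2 * a \<le> b" using assms(2) xe a b
    by (simp add: divide_le_eq le_divide_eq field_simps)
  have inv: "1/x = of_int b / of_int a" using xe by simp
  have "frac (1/x) = of_int (b mod a) / of_int a"
  proof -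
    have "b = a * (b div a) + b mod a" by simp
    hence "(of_int b :: rat) = of_int a * of_int (b div a) + of_int (b mod a)"
      by (metis of_int_add of_int_mult)
    thus ?thesis unfolding inv frac_def floor_divide_of_int_eq using a
      by (simp add: field_simps)
  qed
  hence "ht (frac (1/x)) \<le> nat \<bar>b mod a\<bar> + nat a" using a ht_le by blast
  moreover have "b mod a < b" using \<open>2*a \<le> b\<close> a
  proof -
    have "b mod a < a" using a by simp
    thus ?thesis using \<open>2*a \<le> b\<close> a by linarith
  qed
  moreover have "b mod a \<ge> 0" using a by simp
  ultimately show ?thesis using h a b by simp
qed

lemma ht_inv:
  assumes "1/2 < x" "x \<le> 1"
  shows "ht (1/x - 1) < ht x"
proof -
  obtain a b where xe: "x = of_int a / of_int b" and a: "a > 0" and b: "b > 0"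
    and h: "ht x = nat a + nat b" using ht_form[of x] assms(1) by (metis half_gt_zero less_trans zero_less_one)
  have "a \<le> b" using assms(2) xe a b
    by (simp add: divide_le_eq)
  have "1/x - 1 = of_int (b - a) / of_int a" using xe a by (simp add: field_simps)
  hence "ht (1/x - 1) \<le> nat \<bar>b - a\<bar> + nat a" using a ht_le by blast
  thus ?thesis using h a b \<open>a \<le> b\<close> by simp
qed

lemma ht_compl:
  assumes "1/2 < x" "x \<le> 1"
  shows "ht (1 - x) < ht x"
proof -
  obtain a b where xe: "x = of_int a / of_int b" and a: "a > 0" and b: "b > 0"
    and h: "ht x = nat a + nat b" using ht_form[of x] assms(1) by (metis half_gt_zero less_trans zero_less_one)
  have "a \<le> b" using assms(2) xe a b
    by (simp add: divide_le_eq)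
  have "b < 2 * a" using assms(1) xe a b
    by (simp add: less_divide_eq field_simps)
  have "1 - x = of_int (b - a) / of_int b" using xe b by (simp add: field_simps)
  hence "ht (1 - x) \<le> nat \<bar>b - a\<bar> + nat b" using b ht_le by blast
  thus ?thesis using h a b \<open>a \<le> b\<close> \<open>b < 2*a\<close> by simp
qed

function g :: "rat \<Rightarrow> real" where
  "g x = (if x \<le> 0 \<or> 1 < x then 0
          else if x \<le> 1/2 then (1/4) ^ nat \<lfloor>1/x\<rfloor> * (1 - 2 * g (frac (1/x)))
          else 3/8 - 3/4 * g (1/x - 1) - 1/2 * g (1 - x))"
  by auto
termination by (relation "measure ht") (auto intro: ht_frac ht_inv ht_compl)

declare g.simps[simp del]

lemma g0: "g x = 0" if "x \<le> 0 \<or> 1 < x" using that by (subst g.simps) simp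

lemma g1: "0 < x \<Longrightarrow> x \<le> 1/2 \<Longrightarrow> g x = (1/4) ^ nat \<lfloor>1/x\<rfloor> * (1 - 2 * g (frac (1/x)))"
  by (subst g.simps) simp

lemma g2: "1/2 < x \<Longrightarrow> x \<le> 1 \<Longrightarrow> g x = 3/8 - 3/4 * g (1/x - 1) - 1/2 * g (1 - x)"
  by (subst g.simps) (auto simp: not_le)

lemma g_eqs: "interrobang_eqs g"
  unfolding interrobang_eqs_def using g0 g1 g2 by auto

lemma g_unique: assumes "interrobang_eqs f" shows "f x = g x"
proof (induction x rule: measure_induct_rule[of ht])
  case (less x)
  have e0: "f 0 = 0" and e1: "\<And>x. 0 < x \<and> x \<le> 1/2 \<longrightarrow>
        f x = (1/4) ^ nat \<lfloor>1/x\<rfloor> * (1 - 2 * f (frac (1/x)))"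
    and e2: "\<And>x. 1/2 < x \<and> x \<le> 1 \<longrightarrow> f x = 3/8 - 3/4 * f (1/x - 1) - 1/2 * f (1 - x)"
    and e3: "\<And>x. x < 0 \<or> 1 < x \<longrightarrow> f x = 0"
    using assms unfolding interrobang_eqs_def by blast+
  consider "x < 0 \<or> 1 < x" | "x = 0" | "0 < x \<and> x \<le> 1/2" | "1/2 < x \<and> x \<le> 1" by linarith
  then show ?case
  proof cases
    case 1 thus ?thesis using e3 g0 by auto
  next
    case 2 thus ?thesis using e0 g0 by auto
  next
    case 3 thus ?thesis using e1 g1 less ht_frac by auto
  next
    case 4 thus ?thesis using e2 g2 less ht_inv ht_compl by auto
  qed
qed

lemma interrobang_g: "interrobang = g"
  unfolding interrobang_def
  by (rule the_equality) (use g_eqs g_unique in auto)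

lemma frac_inv_facts:
  assumes "0 < x" "x \<le> 1/2"
  shows "\<lfloor>1/x\<rfloor> \<ge> 2" "0 \<le> frac (1/x)" "frac (1/x) < 1"
proof -
  have "1/x \<ge> 2" using assms by (simp add: field_simps)
  thus "\<lfloor>1/x\<rfloor> \<ge> 2" by (simp add: le_floor_iff)
qed (simp_all add: frac_lt_1)

lemma quarter_pow: "n \<ge> 2 \<Longrightarrow> (1/4::real) ^ n \<le> 1/16"
proof -
  assume "n \<ge> 2"
  hence "(1/4::real) ^ n \<le> (1/4) ^ 2" by (rule power_decreasing) simp_all
  moreover have "(1/4::real) ^ 2 = 1/16" by (simp add: power2_eq_square)
  ultimately show ?thesis by linarith
qed

lemma g_bounds:
  "(0 \<le> x \<and> x \<le> 1 \<longrightarrow> 0 \<le> g x \<and> g x \<le> 3/8) \<and>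
   (0 < x \<and> x \<le> 1 \<longrightarrow> 0 < g x) \<and>
   (0 \<le> x \<and> x < 1 \<longrightarrow> g x < 3/8) \<and>
   (0 \<le> x \<and> x \<le> 1/2 \<longrightarrow> g x \<le> 1/16) \<and>
   (1/2 < x \<and> x \<le> 1 \<longrightarrow> 1/16 < g x)"
proof (induction x rule: measure_induct_rule[of ht])
  case (less x)
  consider "x < 0 \<or> 1 < x" | "x = 0" | "0 < x \<and> x \<le> 1/2" | "1/2 < x \<and> x \<le> 1" by linarith
  then show ?case
  proof cases
    case 1 thus ?thesis by auto
  next
    case 2 thus ?thesis using g0 by auto
  next
    case 3
    define t where "t = frac (1/x)"
    define c where "c = (1/4::real) ^ nat \<lfloor>1/x\<rfloor>"
    have t: "0 \<le> t" "t < 1" using frac_inv_facts 3 unfolding t_def by auto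
    have IH: "0 \<le> g t" "g t < 3/8" using less[of t] ht_frac 3 t unfolding t_def by auto
    have "nat \<lfloor>1/x\<rfloor> \<ge> 2" using frac_inv_facts(1)[of x] 3 by linarith
    hence c: "0 < c" "c \<le> 1/16" unfolding c_def using quarter_pow by auto
    have gx: "g x = c * (1 - 2 * g t)" using g1 3 unfolding c_def t_def by auto
    have "0 < g x" unfolding gx using c IH by (intro mult_pos_pos) auto
    moreover have "g x \<le> c" unfolding gx using c IH
      by (simp add: mult_le_cancel_left1)
    ultimately show ?thesis using 3 c by auto
  next
    case 4
    define u where "u = 1/x - 1"
    define v where "v = 1 - x"
    have x0: "x > 0" using 4 by (metis half_gt_zero less_trans zero_less_one)
    have u: "0 \<le> u" "u < 1" using 4 x0 unfolding u_def by (auto simp: field_simps)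
    have v: "0 \<le> v" "v \<le> 1/2" using 4 unfolding v_def by auto
    have IHu: "0 \<le> g u" "g u < 3/8" "0 < u \<longrightarrow> 0 < g u"
      using less[of u] ht_inv 4 u unfolding u_def by auto
    have IHv: "0 \<le> g v" "g v \<le> 1/16"
      using less[of v] ht_compl 4 v unfolding v_def by auto
    have gx: "g x = 3/8 - 3/4 * g u - 1/2 * g v" using g2 4 unfolding u_def v_def by auto
    have "x < 1 \<Longrightarrow> 0 < u" unfolding u_def using x0 by (simp add: field_simps)
    thus ?thesis using gx IHu IHv 4 by auto
  qed
qed

lemma ht_pos: "ht x \<ge> 1"
proof -
  have "snd (quotient_of x) > 0" by (rule quotient_of_denom_pos')
  thus ?thesis by (simp add: ht_def)
qed

lemma g_mono: "0 \<le> x \<Longrightarrow> x < y \<Longrightarrow> y \<le> 1 \<Longrightarrow> g x < g y"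
proof (induction "ht x + ht y" arbitrary: x y rule: less_induct)
  case less
  note B = g_bounds
  consider "x = 0" | "0 < x \<and> y \<le> 1/2" | "x \<le> 1/2 \<and> 1/2 < y" | "1/2 < x" using less.prems by force
  then show ?case
  proof cases
    case 1 thus ?thesis using B[of y] g0[of 0] less.prems by auto
  next
    case 3 thus ?thesis using B[of y] B[of x] less.prems by auto
  next
    case 2
    have y0: "0 < y" using 2 less.prems by auto
    define tx where "tx = frac (1/x)"
    define ty where "ty = frac (1/y)"
    define nx where "nx = \<lfloor>1/x\<rfloor>"
    define ny where "ny = \<lfloor>1/y\<rfloor>"
    have x12: "x \<le> 1/2" using 2 less.prems by auto
    have tx: "0 \<le> tx" "tx < 1" using frac_inv_facts 2 x12 unfolding tx_def by auto
    have ty: "0 \<le> ty" "ty < 1" using frac_inv_facts 2 y0 unfolding ty_def by auto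
    have nx2: "nx \<ge> 2" using frac_inv_facts 2 x12 unfolding nx_def by auto
    have ny2: "ny \<ge> 2" using frac_inv_facts 2 y0 unfolding ny_def by auto
    have inv: "1/y < 1/x" using 2 less.prems by (simp add: field_simps)
    hence "ny \<le> nx" unfolding nx_def ny_def by (simp add: floor_mono)
    have gx: "g x = (1/4) ^ nat nx * (1 - 2 * g tx)" using g1 2 x12 unfolding nx_def tx_def by auto
    have gy: "g y = (1/4) ^ nat ny * (1 - 2 * g ty)" using g1 2 y0 unfolding ny_def ty_def by auto
    have Btx: "0 \<le> g tx" using B[of tx] tx by auto
    have Bty: "g ty < 3/8" using B[of ty] ty by auto
    show ?thesis
    proof (cases "nx = ny")
      case True
      have "ty < tx" using inv True unfolding tx_def ty_def nx_def ny_def frac_def by simp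
      moreover have "ht ty + ht tx < ht x + ht y"
        using ht_frac[of x] ht_frac[of y] 2 x12 y0 unfolding tx_def ty_def by auto
      ultimately have "g ty < g tx" using less.hyps ty tx by auto
      moreover have "(0::real) < (1/4) ^ nat nx" by simp
      ultimately show ?thesis unfolding gx gy True by simp
    next
      case False
      hence "nat ny + 1 \<le> nat nx" using \<open>ny \<le> nx\<close> ny2 by linarith
      hence p: "(1/4::real) ^ nat nx \<le> (1/4) ^ (nat ny + 1)" by (rule power_decreasing) simp_all
      have "g x \<le> (1/4) ^ nat nx" unfolding gx using Btx by (simp add: mult_le_cancel_left1)
      moreover have "(1/4::real) ^ (nat ny + 1) < g y" unfolding gy using Bty by simp
      ultimately show ?thesis using p by linarith
    qed
  next
    case 4
    have x0: "0 < x" using 4 by (metis half_gt_zero less_trans zero_less_one)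
    have y12: "1/2 < y" using 4 less.prems by auto
    have y0: "0 < y" using x0 less.prems by auto
    define ux where "ux = 1/x - 1"
    define uy where "uy = 1/y - 1"
    have u: "0 \<le> uy" "uy < ux" "ux \<le> 1" using less.prems x0 y0 4 unfolding ux_def uy_def
      by (auto simp: field_simps)
    have v: "0 \<le> 1 - y" "1 - y < 1 - x" "1 - x \<le> 1" using less.prems x0 by auto
    have "ht uy + ht ux < ht x + ht y"
      using ht_inv[of x] ht_inv[of y] 4 y12 less.prems unfolding ux_def uy_def by auto
    hence gu: "g uy < g ux" using less.hyps u by auto
    have "ht (1 - y) + ht (1 - x) < ht x + ht y"
      using ht_compl[of x] ht_compl[of y] 4 y12 less.prems by auto
    hence gv: "g (1 - y) < g (1 - x)" using less.hyps v by auto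
    have gx: "g x = 3/8 - 3/4 * g ux - 1/2 * g (1 - x)" using g2 4 less.prems unfolding ux_def by auto
    have gy: "g y = 3/8 - 3/4 * g uy - 1/2 * g (1 - y)" using g2 y12 less.prems unfolding uy_def by auto
    show ?thesis unfolding gx gy using gu gv by linarith
  qed
qed

theorem mainTheorem9:
  fixes x y :: rat
  assumes "0 \<le> x" and "x < y" and "y \<le> 1"
  shows "interrobang x < interrobang y"
  unfolding interrobang_g using g_mono assms by blast

end
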